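(* Fix spins $j_1,\dots,j_4$ with $J=\sum_i j_i\in\mathbb{Z}$. For admissible $(S,T)$, with $k_{ij}=k_{ij}(j_i,S,T)$, $$2J_1\cdot J_2\,|S,T\rangle=\big(S(S+1)-j_1(j_1+1)-j_2(j_2+1)\big)|S,T\rangle+\big((k_{14}+1)(k_{23}+1)|S,T+1\rangle-k_{14}k_{23}|S,T\rangle\big)+\big((k_{13}+1)(k_{24}+1)|S,T-1\rangle-k_{13}k_{24}|S,T\rangle\big).$$ In particular $J_1\cdot J_2$ does not change the value of $S$. Similarly, $J_1\cdot J_3|S,T\rangle$ is a linear combination of states $|S',T\rangle$ with the same $T$.
   Context: $(z_i|S,T\rangle=\prod_{i<j}[z_i|z_j\rangle^{k_{ij}}/k_{ij}!$ is a holomorphic function of $z_1,\dots,z_4\in\mathbb{C}^2$, where $[z|w\rangle=z_0w_1-z_1w_0$. Here $U=J-S-T$ and $k_{12}=j_1+j_2-S$, $k_{34}=j_3+j_4-S$, $k_{13}=j_1+j_3-T$, $k_{24}=j_2+j_4-T$, $k_{14}=j_1+j_4-U$, $k_{23}=j_2+j_3-U$. $(S,T)$ is admissible iff all $k_{ij}\ge0$, and $|S,T\rangle:=0$ if $(S,T)$ is not admissible. The operators act on holomorphic functions of $(z_1,\dots,z_4)$ by $$E_{ij}=\sum_{A=0,1}z_i^A\frac{\partial}{\partial z_j^A},\qquad 2J_i\cdot J_j:=E_{ij}E_{ji}-\tfrac12E_{ii}E_{jj}-E_{ii}.$$ *)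

theory Defs
  imports "HOL-Analysis.Analysis"
begin

text \<open>Points: z :: nat \<Rightarrow> nat \<Rightarrow> complex, where z i A is the component A (A = 0,1)
  of the spinor z_i in C^2, i = 1..4. Functions are maps to complex.\<close>

type_synonym cfun = "(nat \<Rightarrow> nat \<Rightarrow> complex) \<Rightarrow> complex"

definition bra :: "(nat \<Rightarrow> complex) \<Rightarrow> (nat \<Rightarrow> complex) \<Rightarrow> complex" where
  "bra z w = z 0 * w 1 - z 1 * w 0"

definition pderiv_z :: "nat \<Rightarrow> nat \<Rightarrow> cfun \<Rightarrow> cfun" where
  "pderiv_z j A f z = deriv (\<lambda>w. f (z(j := (z j)(A := w)))) (z j A)"

definition Eop :: "nat \<Rightarrow> nat \<Rightarrow> cfun \<Rightarrow> cfun" where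
  "Eop i j f z = (\<Sum>A\<in>{0,1::nat}. z i A * pderiv_z j A f z)"

definition twoJdot :: "nat \<Rightarrow> nat \<Rightarrow> cfun \<Rightarrow> cfun" where
  "twoJdot i j f z = Eop i j (Eop j i f) z - (1/2) * Eop i i (Eop j j f) z - Eop i i f z"

definition Jtot :: "(nat \<Rightarrow> real) \<Rightarrow> real" where
  "Jtot jj = jj 1 + jj 2 + jj 3 + jj 4"

definition kval :: "(nat \<Rightarrow> real) \<Rightarrow> real \<Rightarrow> real \<Rightarrow> nat \<Rightarrow> nat \<Rightarrow> real" where
  "kval jj S T a b =
     (if {a,b} = {1,2} \<or> {a,b} = {3,4} then jj a + jj b - S
      else if {a,b} = {1,3} \<or> {a,b} = {2,4} then jj a + jj b - T
      else jj a + jj b - (Jtot jj - S - T))"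

definition pairs :: "(nat \<times> nat) set" where
  "pairs = {(a,b). a \<in> {1..4} \<and> b \<in> {1..4} \<and> a < b}"

definition admissible :: "(nat \<Rightarrow> real) \<Rightarrow> real \<Rightarrow> real \<Rightarrow> bool" where
  "admissible jj S T \<longleftrightarrow> (\<forall>(a,b)\<in>pairs. kval jj S T a b \<in> \<int> \<and> kval jj S T a b \<ge> 0)"

definition state :: "(nat \<Rightarrow> real) \<Rightarrow> real \<Rightarrow> real \<Rightarrow> cfun" where
  "state jj S T z =
     (if admissible jj S T then
        (\<Prod>(a,b)\<in>pairs. bra (z a) (z b) ^ nat \<lfloor>kval jj S T a b\<rfloor>
                          / of_nat (fact (nat \<lfloor>kval jj S T a b\<rfloor>)))
      else 0)"

end

theory Submission imports Defs begin

definition Pw :: "int \<Rightarrow> complex \<Rightarrow> complex" where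
  "Pw n x = (if n < 0 then 0 else x ^ nat n / of_nat (fact (nat n)))"

lemma Pw_deriv[derivative_intros]:
  assumes g: "(g has_field_derivative g') (at w)"
  shows "((\<lambda>w. Pw n (g w)) has_field_derivative (g' * Pw (n-1) (g w))) (at w)"
proof (cases "n < 1")
  case True
  then have "(\<lambda>w. Pw n (g w)) = (\<lambda>w. if n < 0 then 0 else 1)" by (auto simp: Pw_def)
  then show ?thesis using True by (simp add: Pw_def)
next
  case False
  define m where "m = nat n - 1"
  have m: "n = int (Suc m)" using False by (simp add: m_def)
  have d: "((\<lambda>w. g w ^ Suc m / of_nat (fact (Suc m))) has_field_derivative
       ((1 + of_nat m) * (g' * g w ^ m) / of_nat (fact (Suc m)))) (at w)"
    by (rule DERIV_cdivide[OF DERIV_power_Suc[OF g]])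
  have ne: "(of_nat (fact m) :: complex) \<noteq> 0" "(1 + of_nat m :: complex) \<noteq> 0"
    by simp (metis of_nat_Suc of_nat_eq_0_iff add.commute nat.distinct(1))
  have ff: "(of_nat (fact (Suc m)) :: complex) = (1 + of_nat m) * of_nat (fact m)"
    by (simp add: fact_Suc algebra_simps)
  have "(1 + of_nat m) * (g' * g w ^ m) / of_nat (fact (Suc m)) = g' * (g w ^ m / of_nat (fact m))"
    unfolding ff using ne by simp
  moreover have "(\<lambda>w. Pw n (g w)) = (\<lambda>w. g w ^ Suc m / of_nat (fact (Suc m)))"
    using m by (simp add: Pw_def del: of_nat_Suc fact_Suc)
  moreover have "Pw (n-1) (g w) = g w ^ m / of_nat (fact m)"
    using m by (simp add: Pw_def)
  ultimately show ?thesis using d by simp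
qed

lemma Pw_mult: "x * Pw n x = of_int (n+1) * Pw (n+1) x"
proof (cases "n < -1")
  case True then show ?thesis by (simp add: Pw_def)
next
  case False
  then consider "n = -1" | "n \<ge> 0" by linarith
  then show ?thesis
  proof cases
    case 1 then show ?thesis by (simp add: Pw_def)
  next
    case 2
    then obtain m where m: "n = int m" by (metis nonneg_int_cases)
    have nn: "nat (int m + 1) = Suc m" by simp
    have ne: "(fact m :: complex) \<noteq> 0" "(1 + of_nat m :: complex) \<noteq> 0"
      by simp (metis of_nat_Suc of_nat_eq_0_iff add.commute nat.distinct(1))
    have "of_int (n+1) * Pw (n+1) x = (1 + of_nat m) * (x * x^m) / ((1 + of_nat m) * fact m)"
      using m nn by (simp add: Pw_def algebra_simps)
    also have "\<dots> = x * x^m / fact m" using ne by simp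
    also have "\<dots> = x * Pw n x" using m by (simp add: Pw_def)
    finally show ?thesis by simp
  qed
qed

definition Mi :: "int \<Rightarrow> int \<Rightarrow> int \<Rightarrow> int \<Rightarrow> int \<Rightarrow> int \<Rightarrow> cfun" where
  "Mi a b c d e f z = Pw a (bra (z 1) (z 2)) * Pw b (bra (z 1) (z 3)) * Pw c (bra (z 1) (z 4))
     * Pw d (bra (z 2) (z 3)) * Pw e (bra (z 2) (z 4)) * Pw f (bra (z 3) (z 4))"

definition beta :: "nat \<Rightarrow> nat \<Rightarrow> nat \<Rightarrow> nat \<Rightarrow> (nat\<Rightarrow>nat\<Rightarrow>complex) \<Rightarrow> complex" where
  "beta a b j A z = (if a = j then (if A = 0 then z b 1 else - z b 0) else 0)
                  + (if b = j then (if A = 0 then - z a 1 else z a 0) else 0)"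

lemma bra_deriv:
  assumes "a \<noteq> b" "A \<in> {0,1}"
  shows "((\<lambda>w. bra ((z(j := (z j)(A := w))) a) ((z(j := (z j)(A := w))) b)) has_field_derivative beta a b j A z) (at w)"
  using assms by (cases "a = j"; cases "b = j"; auto simp: bra_def beta_def intro!: derivative_eq_intros)

lemma Mi_deriv:
  assumes A: "A \<in> {0,1}"
  shows "((\<lambda>w. Mi a b c d e f (z(j := (z j)(A := w)))) has_field_derivative
    (beta 1 2 j A z * Mi (a-1) b c d e f z + beta 1 3 j A z * Mi a (b-1) c d e f z
   + beta 1 4 j A z * Mi a b (c-1) d e f z + beta 2 3 j A z * Mi a b c (d-1) e f z
   + beta 2 4 j A z * Mi a b c d (e-1) f z + beta 3 4 j A z * Mi a b c d e (f-1) z)) (at (z j A))"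
proof -
  let ?u = "\<lambda>w. z(j := (z j)(A := w))"
  have u: "?u (z j A) = z" by simp
  have d12: "((\<lambda>w. Pw a (bra (?u w 1) (?u w 2))) has_field_derivative beta 1 2 j A z * Pw (a-1) (bra (?u (z j A) 1) (?u (z j A) 2))) (at (z j A))"
    by (rule Pw_deriv[OF bra_deriv]) (use A in auto)
  have d13: "((\<lambda>w. Pw b (bra (?u w 1) (?u w 3))) has_field_derivative beta 1 3 j A z * Pw (b-1) (bra (?u (z j A) 1) (?u (z j A) 3))) (at (z j A))"
    by (rule Pw_deriv[OF bra_deriv]) (use A in auto)
  have d14: "((\<lambda>w. Pw c (bra (?u w 1) (?u w 4))) has_field_derivative beta 1 4 j A z * Pw (c-1) (bra (?u (z j A) 1) (?u (z j A) 4))) (at (z j A))"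
    by (rule Pw_deriv[OF bra_deriv]) (use A in auto)
  have d23: "((\<lambda>w. Pw d (bra (?u w 2) (?u w 3))) has_field_derivative beta 2 3 j A z * Pw (d-1) (bra (?u (z j A) 2) (?u (z j A) 3))) (at (z j A))"
    by (rule Pw_deriv[OF bra_deriv]) (use A in auto)
  have d24: "((\<lambda>w. Pw e (bra (?u w 2) (?u w 4))) has_field_derivative beta 2 4 j A z * Pw (e-1) (bra (?u (z j A) 2) (?u (z j A) 4))) (at (z j A))"
    by (rule Pw_deriv[OF bra_deriv]) (use A in auto)
  have d34: "((\<lambda>w. Pw f (bra (?u w 3) (?u w 4))) has_field_derivative beta 3 4 j A z * Pw (f-1) (bra (?u (z j A) 3) (?u (z j A) 4))) (at (z j A))"
    by (rule Pw_deriv[OF bra_deriv]) (use A in auto)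
  note D = DERIV_mult[OF DERIV_mult[OF DERIV_mult[OF DERIV_mult[OF DERIV_mult[OF d12 d13] d14] d23] d24] d34]
  show ?thesis unfolding Mi_def
    by (rule DERIV_cong[OF D]) (simp add: u algebra_simps)
qed

definition gam :: "nat \<Rightarrow> nat \<Rightarrow> nat \<Rightarrow> nat \<Rightarrow> (nat\<Rightarrow>nat\<Rightarrow>complex) \<Rightarrow> complex" where
  "gam a b i j z = (if a = j then bra (z i) (z b) else 0) + (if b = j then bra (z a) (z i) else 0)"

lemma pd_Mi:
  assumes A: "A \<in> {0,1}"
  shows "pderiv_z j A (Mi a b c d e f) z =
     beta 1 2 j A z * Mi (a-1) b c d e f z + beta 1 3 j A z * Mi a (b-1) c d e f z
   + beta 1 4 j A z * Mi a b (c-1) d e f z + beta 2 3 j A z * Mi a b c (d-1) e f z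
   + beta 2 4 j A z * Mi a b c d (e-1) f z + beta 3 4 j A z * Mi a b c d e (f-1) z"
  unfolding pderiv_z_def by (rule DERIV_imp_deriv[OF Mi_deriv[OF A]])

lemma Mi_diff:
  assumes A: "A \<in> {0,1}"
  shows "(\<lambda>w. Mi a b c d e f (z(j := (z j)(A := w)))) field_differentiable at (z j A)"
  using Mi_deriv[OF A] field_differentiable_def by blast

lemma Eop_Mi: "Eop i j (Mi a b c d e f) z =
     gam 1 2 i j z * Mi (a-1) b c d e f z + gam 1 3 i j z * Mi a (b-1) c d e f z
   + gam 1 4 i j z * Mi a b (c-1) d e f z + gam 2 3 i j z * Mi a b c (d-1) e f z
   + gam 2 4 i j z * Mi a b c d (e-1) f z + gam 3 4 i j z * Mi a b c d e (f-1) z"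
  unfolding Eop_def by (simp add: pd_Mi beta_def gam_def bra_def algebra_simps)

lemma Eop_lin:
  assumes f: "\<And>A. A \<in> {0,1} \<Longrightarrow> (\<lambda>w. f (z(j := (z j)(A := w)))) field_differentiable at (z j A)"
      and g: "\<And>A. A \<in> {0,1} \<Longrightarrow> (\<lambda>w. g (z(j := (z j)(A := w)))) field_differentiable at (z j A)"
  shows "Eop i j (\<lambda>z. c * f z + d * g z) z = c * Eop i j f z + d * Eop i j g z"
proof -
  have *: "pderiv_z j A (\<lambda>z. c * f z + d * g z) z = c * pderiv_z j A f z + d * pderiv_z j A g z"
    if A: "A \<in> {0,1}" for A
  proof -
    have df: "((\<lambda>w. f (z(j := (z j)(A := w)))) has_field_derivative pderiv_z j A f z) (at (z j A))"
      unfolding pderiv_z_def using f[OF A] DERIV_deriv_iff_field_differentiable by blast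
    have dg: "((\<lambda>w. g (z(j := (z j)(A := w)))) has_field_derivative pderiv_z j A g z) (at (z j A))"
      unfolding pderiv_z_def using g[OF A] DERIV_deriv_iff_field_differentiable by blast
    show ?thesis unfolding pderiv_z_def[of j A "\<lambda>z. c * f z + d * g z"]
      by (rule DERIV_imp_deriv) (auto intro!: derivative_eq_intros df dg)
  qed
  show ?thesis unfolding Eop_def by (simp add: * algebra_simps)
qed

lemma Eop_scal:
  assumes f: "\<And>A. A \<in> {0,1} \<Longrightarrow> (\<lambda>w. f (z(j := (z j)(A := w)))) field_differentiable at (z j A)"
  shows "Eop i j (\<lambda>z. c * f z) z = c * Eop i j f z"
  using Eop_lin[OF f f, of i c 0] by simp

lemma bra_swap: "bra x y = - bra y x" by (simp add: bra_def)

lemma Mi_s12: "bra (z 1) (z 2) * Mi a b c d e f z = of_int (a+1) * Mi (a+1) b c d e f z"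
proof -
  have "bra (z 1) (z 2) * Mi a b c d e f z = (Pw b (bra (z 1) (z 3)) * Pw c (bra (z 1) (z 4)) * Pw d (bra (z 2) (z 3)) * Pw e (bra (z 2) (z 4)) * Pw f (bra (z 3) (z 4))) * (bra (z 1) (z 2) * Pw a (bra (z 1) (z 2)))"
    by (simp add: Mi_def ac_simps)
  also have "\<dots> = (Pw b (bra (z 1) (z 3)) * Pw c (bra (z 1) (z 4)) * Pw d (bra (z 2) (z 3)) * Pw e (bra (z 2) (z 4)) * Pw f (bra (z 3) (z 4))) * (of_int (a+1) * Pw (a+1) (bra (z 1) (z 2)))"
    by (simp only: Pw_mult)
  also have "\<dots> = of_int (a+1) * Mi (a+1) b c d e f z"
    by (simp add: Mi_def ac_simps)
  finally show ?thesis .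
qed

lemma Mi_s13: "bra (z 1) (z 3) * Mi a b c d e f z = of_int (b+1) * Mi a (b+1) c d e f z"
proof -
  have "bra (z 1) (z 3) * Mi a b c d e f z = (Pw a (bra (z 1) (z 2)) * Pw c (bra (z 1) (z 4)) * Pw d (bra (z 2) (z 3)) * Pw e (bra (z 2) (z 4)) * Pw f (bra (z 3) (z 4))) * (bra (z 1) (z 3) * Pw b (bra (z 1) (z 3)))"
    by (simp add: Mi_def ac_simps)
  also have "\<dots> = (Pw a (bra (z 1) (z 2)) * Pw c (bra (z 1) (z 4)) * Pw d (bra (z 2) (z 3)) * Pw e (bra (z 2) (z 4)) * Pw f (bra (z 3) (z 4))) * (of_int (b+1) * Pw (b+1) (bra (z 1) (z 3)))"
    by (simp only: Pw_mult)
  also have "\<dots> = of_int (b+1) * Mi a (b+1) c d e f z"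
    by (simp add: Mi_def ac_simps)
  finally show ?thesis .
qed

lemma Mi_s14: "bra (z 1) (z 4) * Mi a b c d e f z = of_int (c+1) * Mi a b (c+1) d e f z"
proof -
  have "bra (z 1) (z 4) * Mi a b c d e f z = (Pw a (bra (z 1) (z 2)) * Pw b (bra (z 1) (z 3)) * Pw d (bra (z 2) (z 3)) * Pw e (bra (z 2) (z 4)) * Pw f (bra (z 3) (z 4))) * (bra (z 1) (z 4) * Pw c (bra (z 1) (z 4)))"
    by (simp add: Mi_def ac_simps)
  also have "\<dots> = (Pw a (bra (z 1) (z 2)) * Pw b (bra (z 1) (z 3)) * Pw d (bra (z 2) (z 3)) * Pw e (bra (z 2) (z 4)) * Pw f (bra (z 3) (z 4))) * (of_int (c+1) * Pw (c+1) (bra (z 1) (z 4)))"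
    by (simp only: Pw_mult)
  also have "\<dots> = of_int (c+1) * Mi a b (c+1) d e f z"
    by (simp add: Mi_def ac_simps)
  finally show ?thesis .
qed

lemma Mi_s23: "bra (z 2) (z 3) * Mi a b c d e f z = of_int (d+1) * Mi a b c (d+1) e f z"
proof -
  have "bra (z 2) (z 3) * Mi a b c d e f z = (Pw a (bra (z 1) (z 2)) * Pw b (bra (z 1) (z 3)) * Pw c (bra (z 1) (z 4)) * Pw e (bra (z 2) (z 4)) * Pw f (bra (z 3) (z 4))) * (bra (z 2) (z 3) * Pw d (bra (z 2) (z 3)))"
    by (simp add: Mi_def ac_simps)
  also have "\<dots> = (Pw a (bra (z 1) (z 2)) * Pw b (bra (z 1) (z 3)) * Pw c (bra (z 1) (z 4)) * Pw e (bra (z 2) (z 4)) * Pw f (bra (z 3) (z 4))) * (of_int (d+1) * Pw (d+1) (bra (z 2) (z 3)))"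
    by (simp only: Pw_mult)
  also have "\<dots> = of_int (d+1) * Mi a b c (d+1) e f z"
    by (simp add: Mi_def ac_simps)
  finally show ?thesis .
qed

lemma Mi_s24: "bra (z 2) (z 4) * Mi a b c d e f z = of_int (e+1) * Mi a b c d (e+1) f z"
proof -
  have "bra (z 2) (z 4) * Mi a b c d e f z = (Pw a (bra (z 1) (z 2)) * Pw b (bra (z 1) (z 3)) * Pw c (bra (z 1) (z 4)) * Pw d (bra (z 2) (z 3)) * Pw f (bra (z 3) (z 4))) * (bra (z 2) (z 4) * Pw e (bra (z 2) (z 4)))"
    by (simp add: Mi_def ac_simps)
  also have "\<dots> = (Pw a (bra (z 1) (z 2)) * Pw b (bra (z 1) (z 3)) * Pw c (bra (z 1) (z 4)) * Pw d (bra (z 2) (z 3)) * Pw f (bra (z 3) (z 4))) * (of_int (e+1) * Pw (e+1) (bra (z 2) (z 4)))"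
    by (simp only: Pw_mult)
  also have "\<dots> = of_int (e+1) * Mi a b c d (e+1) f z"
    by (simp add: Mi_def ac_simps)
  finally show ?thesis .
qed

lemma Mi_s34: "bra (z 3) (z 4) * Mi a b c d e f z = of_int (f+1) * Mi a b c d e (f+1) z"
proof -
  have "bra (z 3) (z 4) * Mi a b c d e f z = (Pw a (bra (z 1) (z 2)) * Pw b (bra (z 1) (z 3)) * Pw c (bra (z 1) (z 4)) * Pw d (bra (z 2) (z 3)) * Pw e (bra (z 2) (z 4))) * (bra (z 3) (z 4) * Pw f (bra (z 3) (z 4)))"
    by (simp add: Mi_def ac_simps)
  also have "\<dots> = (Pw a (bra (z 1) (z 2)) * Pw b (bra (z 1) (z 3)) * Pw c (bra (z 1) (z 4)) * Pw d (bra (z 2) (z 3)) * Pw e (bra (z 2) (z 4))) * (of_int (f+1) * Pw (f+1) (bra (z 3) (z 4)))"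
    by (simp only: Pw_mult)
  also have "\<dots> = of_int (f+1) * Mi a b c d e (f+1) z"
    by (simp add: Mi_def ac_simps)
  finally show ?thesis .
qed

lemma bra_self[simp]: "bra x x = 0" by (simp add: bra_def)
lemma bra32: "bra (z 3) (z 2) = - bra (z 2) (z 3)" by (simp add: bra_def)
lemma bra21: "bra (z 2) (z 1) = - bra (z 1) (z 2)" by (simp add: bra_def)
lemma bra21': "bra (z 2) (z (Suc 0)) = - bra (z (Suc 0)) (z 2)" by (simp add: bra_def)

lemmas Mi_s = Mi_s12 Mi_s13 Mi_s14 Mi_s23 Mi_s24 Mi_s34
  Mi_s12[unfolded One_nat_def] Mi_s13[unfolded One_nat_def] Mi_s14[unfolded One_nat_def]

lemma E21: "Eop 2 1 (Mi a b c d e f) = (\<lambda>z. of_int (d+1) * Mi a (b-1) c (d+1) e f z + of_int (e+1) * Mi a b (c-1) d (e+1) f z)"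
  by (rule ext) (simp add: Eop_Mi gam_def Mi_s Mi_s23 Mi_s24)
lemma E12: "Eop 1 2 (Mi a b c d e f) z = of_int (b+1) * Mi a (b+1) c (d-1) e f z + of_int (c+1) * Mi a b (c+1) d (e-1) f z"
  by (simp add: Eop_Mi gam_def Mi_s Mi_s13 Mi_s14)
lemma E11: "Eop 1 1 (Mi a b c d e f) z = of_int (a+b+c) * Mi a b c d e f z"
  by (simp add: Eop_Mi gam_def Mi_s Mi_s12 Mi_s13 Mi_s14 algebra_simps)
lemma E22: "Eop 2 2 (Mi a b c d e f) = (\<lambda>z. of_int (a+d+e) * Mi a b c d e f z)"
  by (rule ext) (simp add: Eop_Mi gam_def Mi_s Mi_s12 Mi_s23 Mi_s24 algebra_simps)
lemma E33: "Eop 3 3 (Mi a b c d e f) = (\<lambda>z. of_int (b+d+f) * Mi a b c d e f z)"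
  by (rule ext) (simp add: Eop_Mi gam_def Mi_s Mi_s13 Mi_s23 Mi_s34 algebra_simps)
lemma E31: "Eop 3 1 (Mi a b c d e f) = (\<lambda>z. (- of_int (d+1)) * Mi (a-1) b c (d+1) e f z + of_int (f+1) * Mi a b (c-1) d e (f+1) z)"
  by (rule ext) (simp add: Eop_Mi gam_def Mi_s bra32 Mi_s23 Mi_s34 algebra_simps)
lemma E13: "Eop 1 3 (Mi a b c d e f) z = (- of_int (a+1)) * Mi (a+1) b c (d-1) e f z + of_int (c+1) * Mi a b (c+1) d e (f-1) z"
  by (simp add: Eop_Mi gam_def Mi_s bra21 bra21' Mi_s12 Mi_s14 algebra_simps)

lemma J12_Mi: "twoJdot 1 2 (Mi a b c d e f) z =
   (of_int ((d+1)*b + (e+1)*c - (a+b+c)) - of_int ((a+d+e)*(a+b+c)) / 2) * Mi a b c d e f z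
   + of_int ((d+1)*(c+1)) * Mi a (b-1) (c+1) (d+1) (e-1) f z
   + of_int ((e+1)*(b+1)) * Mi a (b+1) (c-1) (d-1) (e+1) f z"
proof -
  have 1: "Eop 1 2 (\<lambda>z. of_int (d+1) * Mi a (b-1) c (d+1) e f z + of_int (e+1) * Mi a b (c-1) d (e+1) f z) z
     = of_int (d+1) * Eop 1 2 (Mi a (b-1) c (d+1) e f) z + of_int (e+1) * Eop 1 2 (Mi a b (c-1) d (e+1) f) z"
    by (rule Eop_lin[OF Mi_diff Mi_diff])
  have 2: "Eop 1 1 (\<lambda>z. of_int (a+d+e) * Mi a b c d e f z) z = of_int (a+d+e) * Eop 1 1 (Mi a b c d e f) z"
    by (rule Eop_scal[OF Mi_diff])
  show ?thesis unfolding twoJdot_def E21 E22 1 2 E12 E11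
    by (simp add: field_simps)
qed

lemma J13_Mi: "twoJdot 1 3 (Mi a b c d e f) z =
   (of_int ((d+1)*a + (f+1)*c - (a+b+c)) - of_int ((b+d+f)*(a+b+c)) / 2) * Mi a b c d e f z
   - of_int ((d+1)*(c+1)) * Mi (a-1) b (c+1) (d+1) e (f-1) z
   - of_int ((f+1)*(a+1)) * Mi (a+1) b (c-1) (d-1) e (f+1) z"
proof -
  have 1: "Eop 1 3 (\<lambda>z. (- of_int (d+1)) * Mi (a-1) b c (d+1) e f z + of_int (f+1) * Mi a b (c-1) d e (f+1) z) z
     = (- of_int (d+1)) * Eop 1 3 (Mi (a-1) b c (d+1) e f) z + of_int (f+1) * Eop 1 3 (Mi a b (c-1) d e (f+1)) z"
    by (rule Eop_lin[OF Mi_diff Mi_diff])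
  have 2: "Eop 1 1 (\<lambda>z. of_int (b+d+f) * Mi a b c d e f z) z = of_int (b+d+f) * Eop 1 1 (Mi a b c d e f) z"
    by (rule Eop_scal[OF Mi_diff])
  show ?thesis unfolding twoJdot_def E31 E33 1 2 E13 E11
    by (simp add: field_simps)
qed

lemma pairs_eq: "pairs = {(1,2),(1,3),(1,4),(2,3),(2,4),(3,4)}"
  unfolding pairs_def by auto

lemma kv: "kval jj S T 1 2 = jj 1 + jj 2 - S" "kval jj S T 1 3 = jj 1 + jj 3 - T"
  "kval jj S T 1 4 = jj 1 + jj 4 - (Jtot jj - S - T)" "kval jj S T 2 3 = jj 2 + jj 3 - (Jtot jj - S - T)"
  "kval jj S T 2 4 = jj 2 + jj 4 - T" "kval jj S T 3 4 = jj 3 + jj 4 - S"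
  by (auto simp: kval_def doubleton_eq_iff)

lemma Pw_nonneg: "0 \<le> n \<Longrightarrow> Pw n x = x ^ nat n / of_nat (fact (nat n))"
  by (simp add: Pw_def)

lemma state_Mi:
  assumes "kval jj S T 1 2 = of_int a" "kval jj S T 1 3 = of_int b" "kval jj S T 1 4 = of_int c"
    "kval jj S T 2 3 = of_int d" "kval jj S T 2 4 = of_int e" "kval jj S T 3 4 = of_int f"
  shows "state jj S T = Mi a b c d e f"
proof (rule ext)
  fix z
  show "state jj S T z = Mi a b c d e f z"
  proof (cases "admissible jj S T")
    case True
    then have nn: "0 \<le> a" "0 \<le> b" "0 \<le> c" "0 \<le> d" "0 \<le> e" "0 \<le> f"
      using assms unfolding admissible_def pairs_eq by auto
    show ?thesis using True assms nn unfolding state_def pairs_eq Mi_def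
      by (simp add: Pw_nonneg ac_simps)
  next
    case False
    then have "a < 0 \<or> b < 0 \<or> c < 0 \<or> d < 0 \<or> e < 0 \<or> f < 0"
      using assms unfolding admissible_def pairs_eq by auto
    then show ?thesis using False unfolding state_def Mi_def by (auto simp: Pw_def)
  qed
qed

theorem mainTheorem9:
  fixes jj :: "nat \<Rightarrow> real" and S T :: real
  assumes spins: "\<forall>i\<in>{1..4::nat}. jj i \<ge> 0 \<and> 2 * jj i \<in> \<int>"
    and Jint: "Jtot jj \<in> \<int>"
    and adm: "admissible jj S T"
  shows "(\<forall>z. twoJdot 1 2 (state jj S T) z =
            complex_of_real (S * (S + 1) - jj 1 * (jj 1 + 1) - jj 2 * (jj 2 + 1)) * state jj S T z
          + (complex_of_real ((kval jj S T 1 4 + 1) * (kval jj S T 2 3 + 1)) * state jj S (T + 1) z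
             - complex_of_real (kval jj S T 1 4 * kval jj S T 2 3) * state jj S T z)
          + (complex_of_real ((kval jj S T 1 3 + 1) * (kval jj S T 2 4 + 1)) * state jj S (T - 1) z
             - complex_of_real (kval jj S T 1 3 * kval jj S T 2 4) * state jj S T z))
       \<and> (\<exists>A :: real set. \<exists>c :: real \<Rightarrow> complex. finite A \<and>
            twoJdot 1 2 (state jj S T) = (\<lambda>z. \<Sum>T'\<in>A. c T' * state jj S T' z))
       \<and> (\<exists>A :: real set. \<exists>c :: real \<Rightarrow> complex. finite A \<and>
            twoJdot 1 3 (state jj S T) = (\<lambda>z. \<Sum>S'\<in>A. c S' * state jj S' T z))"
proof -
  have ints: "\<forall>(x,y)\<in>pairs. kval jj S T x y \<in> \<int>" using adm unfolding admissible_def by auto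
  obtain a where a: "kval jj S T 1 2 = of_int a" using ints unfolding pairs_eq by (auto elim: Ints_cases)
  obtain b where b: "kval jj S T 1 3 = of_int b" using ints unfolding pairs_eq by (auto elim: Ints_cases)
  obtain c where c: "kval jj S T 1 4 = of_int c" using ints unfolding pairs_eq by (auto elim: Ints_cases)
  obtain d where d: "kval jj S T 2 3 = of_int d" using ints unfolding pairs_eq by (auto elim: Ints_cases)
  obtain e where e: "kval jj S T 2 4 = of_int e" using ints unfolding pairs_eq by (auto elim: Ints_cases)
  obtain f where f: "kval jj S T 3 4 = of_int f" using ints unfolding pairs_eq by (auto elim: Ints_cases)
  note abc = a b c d e f
  note kvs = kv[of jj S T]
  have a': "jj 1 + jj 2 - S = of_int a" and b': "jj 1 + jj 3 - T = of_int b"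
    and c': "jj 1 + jj 4 - (Jtot jj - S - T) = of_int c" and d': "jj 2 + jj 3 - (Jtot jj - S - T) = of_int d"
    and e': "jj 2 + jj 4 - T = of_int e" and f': "jj 3 + jj 4 - S = of_int f"
    using abc kvs by simp_all
  have s0: "state jj S T = Mi a b c d e f" by (rule state_Mi[OF abc])
  have sTp: "state jj S (T+1) = Mi a (b-1) (c+1) (d+1) (e-1) f"
    by (rule state_Mi) (simp_all add: kv kv[unfolded One_nat_def] a'[symmetric] b'[symmetric] c'[symmetric] d'[symmetric] e'[symmetric] f'[symmetric])
  have sTm: "state jj S (T-1) = Mi a (b+1) (c-1) (d-1) (e+1) f"
    by (rule state_Mi) (simp_all add: kv kv[unfolded One_nat_def] a'[symmetric] b'[symmetric] c'[symmetric] d'[symmetric] e'[symmetric] f'[symmetric])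
  have sSp: "state jj (S+1) T = Mi (a-1) b (c+1) (d+1) e (f-1)"
    by (rule state_Mi) (simp_all add: kv kv[unfolded One_nat_def] a'[symmetric] b'[symmetric] c'[symmetric] d'[symmetric] e'[symmetric] f'[symmetric])
  have sSm: "state jj (S-1) T = Mi (a+1) b (c-1) (d-1) e (f+1)"
    by (rule state_Mi) (simp_all add: kv kv[unfolded One_nat_def] a'[symmetric] b'[symmetric] c'[symmetric] d'[symmetric] e'[symmetric] f'[symmetric])
  have R: "S * (S + 1) - jj 1 * (jj 1 + 1) - jj 2 * (jj 2 + 1) =
     real_of_int ((d+1)*b + (e+1)*c - (a+b+c)) - real_of_int ((a+d+e)*(a+b+c)) / 2
     + real_of_int c * real_of_int d + real_of_int b * real_of_int e"
    unfolding of_int_add of_int_mult of_int_diff of_int_1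
    unfolding a'[symmetric] b'[symmetric] c'[symmetric] d'[symmetric] e'[symmetric] f'[symmetric]
    by (simp add: Jtot_def field_simps)
  have C1: "\<forall>z. twoJdot 1 2 (state jj S T) z =
            complex_of_real (S * (S + 1) - jj 1 * (jj 1 + 1) - jj 2 * (jj 2 + 1)) * state jj S T z
          + (complex_of_real ((kval jj S T 1 4 + 1) * (kval jj S T 2 3 + 1)) * state jj S (T + 1) z
             - complex_of_real (kval jj S T 1 4 * kval jj S T 2 3) * state jj S T z)
          + (complex_of_real ((kval jj S T 1 3 + 1) * (kval jj S T 2 4 + 1)) * state jj S (T - 1) z
             - complex_of_real (kval jj S T 1 3 * kval jj S T 2 4) * state jj S T z)"
  proof
    fix z
    show "twoJdot 1 2 (state jj S T) z =
            complex_of_real (S * (S + 1) - jj 1 * (jj 1 + 1) - jj 2 * (jj 2 + 1)) * state jj S T z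
          + (complex_of_real ((kval jj S T 1 4 + 1) * (kval jj S T 2 3 + 1)) * state jj S (T + 1) z
             - complex_of_real (kval jj S T 1 4 * kval jj S T 2 3) * state jj S T z)
          + (complex_of_real ((kval jj S T 1 3 + 1) * (kval jj S T 2 4 + 1)) * state jj S (T - 1) z
             - complex_of_real (kval jj S T 1 3 * kval jj S T 2 4) * state jj S T z)"
      unfolding s0 sTp sTm J12_Mi R abc
      by (simp add: algebra_simps)
  qed
  have C2: "\<exists>A :: real set. \<exists>cc :: real \<Rightarrow> complex. finite A \<and>
            twoJdot 1 2 (state jj S T) = (\<lambda>z. \<Sum>T'\<in>A. cc T' * state jj S T' z)"
  proof (intro exI conjI)
    let ?cc = "\<lambda>x. if x = T then complex_of_real (S * (S + 1) - jj 1 * (jj 1 + 1) - jj 2 * (jj 2 + 1))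
          - complex_of_real (kval jj S T 1 4 * kval jj S T 2 3) - complex_of_real (kval jj S T 1 3 * kval jj S T 2 4)
        else if x = T + 1 then complex_of_real ((kval jj S T 1 4 + 1) * (kval jj S T 2 3 + 1))
        else complex_of_real ((kval jj S T 1 3 + 1) * (kval jj S T 2 4 + 1))"
    show "finite {T, T+1, T-1}" by simp
    show "twoJdot 1 2 (state jj S T) = (\<lambda>z. \<Sum>T'\<in>{T, T+1, T-1}. ?cc T' * state jj S T' z)"
      using C1 by (auto simp: algebra_simps)
  qed
  have C3: "\<exists>A :: real set. \<exists>cc :: real \<Rightarrow> complex. finite A \<and>
            twoJdot 1 3 (state jj S T) = (\<lambda>z. \<Sum>S'\<in>A. cc S' * state jj S' T z)"
  proof (intro exI conjI)
    let ?cc = "\<lambda>x. if x = S then (of_int ((d+1)*a + (f+1)*c - (a+b+c)) - of_int ((b+d+f)*(a+b+c)) / 2 :: complex)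
        else if x = S + 1 then - of_int ((d+1)*(c+1))
        else - of_int ((f+1)*(a+1))"
    show "finite {S, S+1, S-1}" by simp
    show "twoJdot 1 3 (state jj S T) = (\<lambda>z. \<Sum>S'\<in>{S, S+1, S-1}. ?cc S' * state jj S' T z)"
    proof (rule ext)
      fix z
      have hsum: "(\<Sum>S'\<in>{S, S+1, S-1}. ?cc S' * state jj S' T z) = ?cc S * state jj S T z + ?cc (S+1) * state jj (S+1) T z + ?cc (S-1) * state jj (S-1) T z"
        by simp
      show "twoJdot 1 3 (state jj S T) z = (\<Sum>S'\<in>{S, S+1, S-1}. ?cc S' * state jj S' T z)"
        unfolding hsum unfolding s0 sSp sSm J13_Mi by (simp add: field_simps)
    qed
  qed
  show ?thesis using C1 C2 C3 by blast
qed

end
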